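(* Let $(\mathbf{x}^0,\mathbf{Z}^0,\Gamma^0)$ be any initialization with $\mathbf{x}^0\in\mathcal{X}$, and let $\{(\mathbf{x}^n,\mathbf{Z}^n,\Gamma^n)\}_{n\ge 0}$ be generated by the SPULTRA iteration defined in the context, where the image update step is solved exactly. Then: (i) the sequence $\{(\mathbf{x}^n,\mathbf{Z}^n,\Gamma^n)\}$ is bounded; (ii) the objective sequence $\{G(\mathbf{x}^n,\mathbf{Z}^n,\Gamma^n)\}$ is monotonically nonincreasing and converges to a finite limit $G^*=G^*(\mathbf{x}^0,\mathbf{Z}^0,\Gamma^0)$; (iii) every accumulation point $(\mathbf{x}^*,\mathbf{Z}^*,\Gamma^* )$ of the iterate sequence satisfies $G(\mathbf{x}^*,\mathbf{Z}^*,\Gamma^* )=G^*$; (iv) every accumulation point $(\mathbf{x}^*,\mathbf{Z}^*,\Gamma^* )$ satisfies the partial optimality conditions $$\mathbf{0}\in\partial_{\mathbf{x}}G(\mathbf{x},\mathbf{Z}^*,\Gamma^* )\big|_{\mathbf{x}=\mathbf{x}^*},\qquad (\mathbf{Z}^*,\Gamma^* )\in\arg\min_{\mathbf{Z},\Gamma}G(\mathbf{x}^*,\mathbf{Z},\Gamma),$$ where $\partial_{\mathbf{x}}$ denotes the (limiting) subdifferential of $G$ with respect to $\mathbf{x}$; (v) $\|\mathbf{x}^{n+1}-\mathbf{x}^n\|_2\to 0$ as $n\to\infty$.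
   Context: Data and model. $\mathbf{A}\in\mathbb{R}^{N_d\times N_p}$ is a matrix with nonnegative entries; write $l_i(\mathbf{x})=[\mathbf{A}\mathbf{x}]_i$. Constants: $I_0>0$, $\sigma^2\ge 0$, measurements $Y_i\in\mathbb{R}$, coefficients $s_{1_i},s_{2_i}\in\mathbb{R}$, $x_{\max}>0$. Let $f_i(l)=s_{1_i}l+s_{2_i}l^2$ and $$h_i(l)=\big(I_0e^{-f_i(l)}+\sigma^2\big)-Y_i\log\big(I_0e^{-f_i(l)}+\sigma^2\big),\qquad \mathsf{L}(\mathbf{x})=\sum_{i=1}^{N_d}h_i(l_i(\mathbf{x})).$$ Let $\mathcal{X}=\{\mathbf{x}\in\mathbb{R}^{N_p}:0\le x_j\le x_{\max}\ \forall j\}$ and $\mathfrak{X}(\mathbf{x})=0$ if $\mathbf{x}\in\mathcal{X}$, $+\infty$ otherwise. Regularizer. For $j=1,\dots,\tilde N$, $\mathbf{P}_j\in\mathbb{R}^{v\times N_p}$ extracts the $j$-th patch of $v$ voxels (a row-selection matrix); assume every voxel belongs to at least one patch. $\boldsymbol{\Omega}_1,\dots,\boldsymbol{\Omega}_K\in\mathbb{R}^{v\times v}$ are fixed nonsingular (pre-learned) transforms. Weights $\tau_j>0$, and $\beta>0$, $\gamma_c>0$. Variables: sparse code matrix $\mathbf{Z}=[\mathbf{z}_1,\dots,\mathbf{z}_{\tilde N}]$ with $\mathbf{z}_j\in\mathbb{R}^v$, and class vector $\Gamma\in\{1,\dots,K\}^{\tilde N}$. Define $$\mathsf{R}(\mathbf{x},\mathbf{Z},\Gamma)=\beta\sum_{j=1}^{\tilde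 N}\tau_j\Big(\|\boldsymbol{\Omega}_{\Gamma_j}\mathbf{P}_j\mathbf{x}-\mathbf{z}_j\|_2^2+\gamma_c^2\|\mathbf{z}_j\|_0\Big),$$ where $\|\cdot\|_0$ counts nonzero entries. The objective is $G(\mathbf{x},\mathbf{Z},\Gamma)=\mathsf{L}(\mathbf{x})+\mathsf{R}(\mathbf{x},\mathbf{Z},\Gamma)+\mathfrak{X}(\mathbf{x})$. Surrogates. Curvature functions $c_i:[0,\infty)\to(0,\infty)$ are continuous and chosen so that, with $$q_i(l;\bar l)=h_i(\bar l)+\dot h_i(\bar l)(l-\bar l)+\tfrac12 c_i(\bar l)(l-\bar l)^2,$$ one has $h_i(l)\le q_i(l;\bar l)$ for all $l\ge0$, $\bar l\ge 0$ (as achieved by the optimum-curvature rule $c_i(\bar l)=2\,[h_i(0)-h_i(\bar l)+\bar l\,\dot h_i(\bar l)]/\bar l^2$ for $\bar l>0$, $c_i(0)=\ddot h_i(0)$, with nonpositive values replaced by a small positive constant). For $\bar{\mathbf{x}}\in\mathcal{X}$ define the majorizer $$F(\mathbf{x},\mathbf{Z},\Gamma;\bar{\mathbf{x}})=\sum_{i=1}^{N_d}q_i\big(l_i(\mathbf{x});l_i(\bar{\mathbf{x}})\big)+\mathsf{R}(\mathbf{x},\mathbf{Z},\Gamma)+\mathfrak{X}(\mathbf{x}).$$ SPULTRA iteration (exact version). Given $(\mathbf{x}^n,\mathbf{Z}^n,\Gamma^n)$: image update $\mathbf{x}^{n+1}\in\arg\min_{\mathbf{x}}F(\mathbf{x},\mathbf{Z}^n,\Gamma^n;\mathbf{x}^n)$;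 then sparse coding and clustering $(\mathbf{Z}^{n+1},\Gamma^{n+1})\in\arg\min_{\mathbf{Z},\Gamma}\mathsf{R}(\mathbf{x}^{n+1},\mathbf{Z},\Gamma)$ (computed exactly: for each $j$, $\Gamma_j^{n+1}$ minimizes over $k$ the value $\|\boldsymbol{\Omega}_k\mathbf{P}_j\mathbf{x}^{n+1}-H_{\gamma_c}(\boldsymbol{\Omega}_k\mathbf{P}_j\mathbf{x}^{n+1})\|_2^2+\gamma_c^2\|H_{\gamma_c}(\boldsymbol{\Omega}_k\mathbf{P}_j\mathbf{x}^{n+1})\|_0$ and $\mathbf{z}_j^{n+1}=H_{\gamma_c}(\boldsymbol{\Omega}_{\Gamma_j^{n+1}}\mathbf{P}_j\mathbf{x}^{n+1})$, where $H_{\gamma_c}$ zeroes entries of magnitude less than $\gamma_c$ and keeps the others). *)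

theory Defs
  imports "HOL-Analysis.Analysis"
begin

text \<open>Index types: 'd detector bins (N_d), 'p voxels (N_p), 'v voxels per patch (v),
  'j patches (tilde N), 'k classes (K).  All finite.\<close>

definition fquad :: "real \<Rightarrow> real \<Rightarrow> real \<Rightarrow> real" where
  "fquad s1 s2 l = s1 * l + s2 * l\<^sup>2"

definition hfun :: "real \<Rightarrow> real \<Rightarrow> real \<Rightarrow> real \<Rightarrow> real \<Rightarrow> real \<Rightarrow> real" where
  "hfun I0 sigma2 Y s1 s2 l =
     (let u = I0 * exp (- fquad s1 s2 l) + sigma2 in u - Y * ln u)"

definition Lfun :: "real \<Rightarrow> real \<Rightarrow> ('d \<Rightarrow> real) \<Rightarrow> ('d \<Rightarrow> real) \<Rightarrow> ('d \<Rightarrow> real)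
     \<Rightarrow> real^'p^'d \<Rightarrow> real^'p \<Rightarrow> real" where
  "Lfun I0 sigma2 Y s1 s2 A x = (\<Sum>i\<in>UNIV. hfun I0 sigma2 (Y i) (s1 i) (s2 i) ((A *v x) $ i))"

definition qsurr :: "(real \<Rightarrow> real) \<Rightarrow> (real \<Rightarrow> real) \<Rightarrow> real \<Rightarrow> real \<Rightarrow> real" where
  "qsurr h c l lb = h lb + deriv h lb * (l - lb) + 1/2 * c lb * (l - lb)\<^sup>2"

definition Xset :: "real \<Rightarrow> (real^'p) set" where
  "Xset xmax = {x. \<forall>c. 0 \<le> x $ c \<and> x $ c \<le> xmax}"

definition l0 :: "real^'v \<Rightarrow> nat" where
  "l0 z = card {r. z $ r \<noteq> 0}"

definition hardthr :: "real \<Rightarrow> real^'v \<Rightarrow> real^'v" where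
  "hardthr g z = (\<chi> r. if \<bar>z $ r\<bar> < g then 0 else z $ r)"

definition Rfun :: "real \<Rightarrow> real \<Rightarrow> ('j \<Rightarrow> real) \<Rightarrow> ('j \<Rightarrow> real^'p^'v) \<Rightarrow> ('k \<Rightarrow> real^'v^'v)
     \<Rightarrow> real^'p \<Rightarrow> ('j \<Rightarrow> real^'v) \<Rightarrow> ('j \<Rightarrow> 'k) \<Rightarrow> real" where
  "Rfun beta gc tau P Om x Z Gm =
     beta * (\<Sum>j\<in>UNIV. tau j * ((norm (Om (Gm j) *v (P j *v x) - Z j))\<^sup>2 + gc\<^sup>2 * real (l0 (Z j))))"

definition Gobj :: "real \<Rightarrow> real \<Rightarrow> ('d \<Rightarrow> real) \<Rightarrow> ('d \<Rightarrow> real) \<Rightarrow> ('d \<Rightarrow> real)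
     \<Rightarrow> real^'p^'d \<Rightarrow> real \<Rightarrow> real \<Rightarrow> ('j \<Rightarrow> real) \<Rightarrow> ('j \<Rightarrow> real^'p^'v) \<Rightarrow> ('k \<Rightarrow> real^'v^'v)
     \<Rightarrow> real \<Rightarrow> real^'p \<Rightarrow> ('j \<Rightarrow> real^'v) \<Rightarrow> ('j \<Rightarrow> 'k) \<Rightarrow> ereal" where
  "Gobj I0 sigma2 Y s1 s2 A beta gc tau P Om xmax x Z Gm =
     (if x \<in> Xset xmax
      then ereal (Lfun I0 sigma2 Y s1 s2 A x + Rfun beta gc tau P Om x Z Gm)
      else \<infinity>)"

definition Fmaj :: "real \<Rightarrow> real \<Rightarrow> ('d \<Rightarrow> real) \<Rightarrow> ('d \<Rightarrow> real) \<Rightarrow> ('d \<Rightarrow> real)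
     \<Rightarrow> ('d \<Rightarrow> real \<Rightarrow> real)
     \<Rightarrow> real^'p^'d \<Rightarrow> real \<Rightarrow> real \<Rightarrow> ('j \<Rightarrow> real) \<Rightarrow> ('j \<Rightarrow> real^'p^'v) \<Rightarrow> ('k \<Rightarrow> real^'v^'v)
     \<Rightarrow> real \<Rightarrow> real^'p \<Rightarrow> ('j \<Rightarrow> real^'v) \<Rightarrow> ('j \<Rightarrow> 'k) \<Rightarrow> real^'p \<Rightarrow> ereal" where
  "Fmaj I0 sigma2 Y s1 s2 c A beta gc tau P Om xmax x Z Gm xb =
     (if x \<in> Xset xmax
      then ereal ((\<Sum>i\<in>UNIV. qsurr (hfun I0 sigma2 (Y i) (s1 i) (s2 i)) (c i)
                                  ((A *v x) $ i) ((A *v xb) $ i))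
                  + Rfun beta gc tau P Om x Z Gm)
      else \<infinity>)"

definition clustcost :: "real \<Rightarrow> ('j \<Rightarrow> real^'p^'v) \<Rightarrow> ('k \<Rightarrow> real^'v^'v) \<Rightarrow> real^'p \<Rightarrow> 'j \<Rightarrow> 'k \<Rightarrow> real" where
  "clustcost gc P Om x j k =
     (let w = Om k *v (P j *v x) in (norm (w - hardthr gc w))\<^sup>2 + gc\<^sup>2 * real (l0 (hardthr gc w)))"

text \<open>Frechet (regular) subdifferential of an extended-real valued function,
  written out via its epsilon-delta characterisation of
  liminf_{y->x, y~=x} (f y - f x - <v,y-x>)/|y-x| >= 0.\<close>
definition frechet_subdiff :: "('a::real_inner \<Rightarrow> ereal) \<Rightarrow> 'a \<Rightarrow> 'a set" where
  "frechet_subdiff f x = {v. \<bar>f x\<bar> \<noteq> \<infinity> \<and>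
     (\<forall>e>0. \<exists>d>0. \<forall>y. norm (y - x) < d \<longrightarrow>
        f y \<ge> f x + ereal (inner v (y - x) - e * norm (y - x)))}"

definition limiting_subdiff :: "('a::real_inner \<Rightarrow> ereal) \<Rightarrow> 'a \<Rightarrow> 'a set" where
  "limiting_subdiff f x = {v. \<exists>xs vs. xs \<longlonglongrightarrow> x \<and> (\<lambda>k. f (xs k)) \<longlonglongrightarrow> f x \<and>
      (\<forall>k. vs k \<in> frechet_subdiff f (xs k)) \<and> vs \<longlonglongrightarrow> v}"

text \<open>Accumulation point of the iterate sequence (x^n, Z^n, Gamma^n); Z is compared
  patchwise (finite index set, so this is the product topology), Gamma lives in a finite
  discrete set, so convergence means eventual equality.\<close>
definition is_accum_pt :: "(nat \<Rightarrow> real^'p) \<Rightarrow> (nat \<Rightarrow> 'j \<Rightarrow> real^'v) \<Rightarrow> (nat \<Rightarrow> 'j \<Rightarrow> 'k)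
     \<Rightarrow> real^'p \<Rightarrow> ('j \<Rightarrow> real^'v) \<Rightarrow> ('j \<Rightarrow> 'k) \<Rightarrow> bool" where
  "is_accum_pt xs Zs Gs xst Zst Gst \<longleftrightarrow>
     (\<exists>r. strict_mono r \<and> (\<lambda>n. xs (r n)) \<longlonglongrightarrow> xst \<and>
          (\<forall>j. (\<lambda>n. Zs (r n) j) \<longlonglongrightarrow> Zst j) \<and>
          (\<forall>\<^sub>F n in sequentially. Gs (r n) = Gst))"

end

theory Submission imports Defs begin

definition hD :: "real \<Rightarrow> real \<Rightarrow> real \<Rightarrow> real \<Rightarrow> real \<Rightarrow> real \<Rightarrow> real" where
  "hD I0 sigma2 Y s1 s2 l =
    (- I0 * exp (- (s1 * l + s2 * l\<^sup>2)) * (s1 + 2 * s2 * l))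
    - Y * ((- I0 * exp (- (s1 * l + s2 * l\<^sup>2)) * (s1 + 2 * s2 * l)) / (I0 * exp (- (s1 * l + s2 * l\<^sup>2)) + sigma2))"

lemma hfun_deriv:
  assumes "I0 > 0" "sigma2 \<ge> 0"
  shows "(hfun I0 sigma2 Y s1 s2 has_real_derivative hD I0 sigma2 Y s1 s2 l) (at l)"
proof -
  have pos: "I0 * exp (- (s1 * l + s2 * l\<^sup>2)) + sigma2 > 0"
    using assms by (simp add: add_pos_nonneg)
  let ?f = "\<lambda>l. - (s1 * l + s2 * l\<^sup>2)"
  let ?u = "\<lambda>l. I0 * exp (?f l) + sigma2"
  have d1: "(?f has_real_derivative - (s1 + 2 * s2 * l)) (at l)"
    by (auto intro!: derivative_eq_intros simp: power2_eq_square)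
  have d2: "(?u has_real_derivative I0 * (exp (?f l) * - (s1 + 2 * s2 * l))) (at l)"
  proof -
    have "((\<lambda>l. exp (?f l)) has_real_derivative exp (?f l) * - (s1 + 2 * s2 * l)) (at l)"
      by (rule DERIV_fun_exp[OF d1])
    from DERIV_add[OF DERIV_cmult[OF this, of I0] DERIV_const[of sigma2]] show ?thesis by simp
  qed
  have d3: "((\<lambda>l. ln (?u l)) has_real_derivative (I0 * (exp (?f l) * - (s1 + 2 * s2 * l))) / ?u l) (at l)"
    using DERIV_chain2[OF DERIV_ln_divide[OF pos] d2] by simp
  have "((\<lambda>l. ?u l - Y * ln (?u l)) has_real_derivative
      I0 * (exp (?f l) * - (s1 + 2 * s2 * l)) - Y * ((I0 * (exp (?f l) * - (s1 + 2 * s2 * l))) / ?u l)) (at l)"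
    by (intro DERIV_diff d2 DERIV_cmult d3)
  then show ?thesis
    unfolding hfun_def fquad_def Let_def hD_def by (simp add: algebra_simps)
qed

lemma hD_cont:
  assumes "I0 > 0" "sigma2 \<ge> 0"
  shows "isCont (hD I0 sigma2 Y s1 s2) l"
proof -
  have pos: "\<And>l. I0 * exp (- (s1 * l + s2 * l\<^sup>2)) + sigma2 \<noteq> 0"
    using assms by (smt (verit) exp_gt_zero mult_pos_pos)
  show ?thesis unfolding hD_def
    by (intro continuous_intros pos)
qed

lemma deriv_hfun:
  assumes "I0 > 0" "sigma2 \<ge> 0"
  shows "deriv (hfun I0 sigma2 Y s1 s2) = hD I0 sigma2 Y s1 s2"
  using DERIV_imp_deriv[OF hfun_deriv[OF assms]] by auto

lemma hfun_cont:
  assumes "I0 > 0" "sigma2 \<ge> 0"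
  shows "isCont (hfun I0 sigma2 Y s1 s2) l"
  using DERIV_isCont[OF hfun_deriv[OF assms]] .

lemma Xset_cbox: "Xset xmax = cbox 0 (\<chi> i. xmax)"
  by (auto simp: Xset_def mem_box_cart)

lemma Xset_mid: "x \<in> Xset xmax \<Longrightarrow> y \<in> Xset xmax \<Longrightarrow> (1/2) *\<^sub>R (x + y) \<in> Xset xmax"
  by (auto simp: Xset_def) (smt (verit))+

lemma l_nonneg:
  assumes "\<forall>i q. 0 \<le> A $ i $ q" "x \<in> Xset xmax"
  shows "0 \<le> (A *v x) $ i"
  using assms unfolding Xset_def matrix_vector_mult_def
  by (auto intro!: sum_nonneg)

lemma tendsto_Av:
  fixes A :: "real^'n^'m"
  shows "(X \<longlongrightarrow> x) F \<Longrightarrow> ((\<lambda>n. A *v X n) \<longlongrightarrow> A *v x) F"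
  by (rule bounded_linear.tendsto[OF matrix_vector_mul_bounded_linear])

lemma tendsto_Lfun:
  assumes "I0 > 0" "sigma2 \<ge> 0" "X \<longlonglongrightarrow> x"
  shows "(\<lambda>n. Lfun I0 sigma2 Y s1 s2 A (X n)) \<longlonglongrightarrow> Lfun I0 sigma2 Y s1 s2 A x"
  unfolding Lfun_def
  apply (intro tendsto_sum)
  apply (rule isCont_tendsto_compose[OF hfun_cont[OF assms(1,2)]])
  apply (intro tendsto_vec_nth tendsto_Av assms(3))
  done

lemma Fmaj_self:
  assumes "x \<in> Xset xmax"
  shows "Fmaj I0 sigma2 Y s1 s2 c A beta gc tau P Om xmax x Z Gm x = Gobj I0 sigma2 Y s1 s2 A beta gc tau P Om xmax x Z Gm"
  using assms by (simp add: Fmaj_def Gobj_def qsurr_def Lfun_def)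

lemma Fmaj_maj:
  assumes "\<forall>i q. 0 \<le> A $ i $ q"
    and "\<forall>i l lb. 0 \<le> l \<longrightarrow> 0 \<le> lb \<longrightarrow> hfun I0 sigma2 (Y i) (s1 i) (s2 i) l
              \<le> qsurr (hfun I0 sigma2 (Y i) (s1 i) (s2 i)) (c i) l lb"
    and "x \<in> Xset xmax" "xb \<in> Xset xmax"
  shows "Gobj I0 sigma2 Y s1 s2 A beta gc tau P Om xmax x Z Gm \<le> Fmaj I0 sigma2 Y s1 s2 c A beta gc tau P Om xmax x Z Gm xb"
proof -
  have "Lfun I0 sigma2 Y s1 s2 A x \<le> (\<Sum>i\<in>UNIV. qsurr (hfun I0 sigma2 (Y i) (s1 i) (s2 i)) (c i)
                                  ((A *v x) $ i) ((A *v xb) $ i))"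
    unfolding Lfun_def
    by (intro sum_mono assms(2)[rule_format] l_nonneg[OF assms(1) assms(3)] l_nonneg[OF assms(1) assms(4)])
  then show ?thesis using assms(3) by (simp add: Fmaj_def Gobj_def)
qed

lemma norm2_vec: "(norm (v::real^'n))\<^sup>2 = (\<Sum>r\<in>UNIV. (v $ r)\<^sup>2)"
  by (simp add: norm_vec_def L2_set_def sum_nonneg)

lemma l0_sum: "real (l0 z) = (\<Sum>r\<in>UNIV. if z $ r \<noteq> 0 then 1 else 0)"
  by (simp add: l0_def sum.If_cases Collect_conj_eq[symmetric])

lemma hardthr_opt:
  assumes "g > 0"
  shows "(norm (w - hardthr g w))\<^sup>2 + g\<^sup>2 * real (l0 (hardthr g w)) \<le> (norm (w - z))\<^sup>2 + g\<^sup>2 * real (l0 z)"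
proof -
  have pt: "((w$r) - (hardthr g w)$r)\<^sup>2 + g\<^sup>2 * (if (hardthr g w)$r \<noteq> 0 then 1 else 0)
     \<le> ((w$r) - z$r)\<^sup>2 + g\<^sup>2 * (if z$r \<noteq> 0 then 1 else 0)" for r
  proof (cases "\<bar>w$r\<bar> < g")
    case True
    then have a: "(w$r)\<^sup>2 \<le> g\<^sup>2" by (metis abs_ge_zero less_imp_le power2_abs power_mono)
    have b: "0 \<le> (w $ r - z $ r)\<^sup>2" by simp
    show ?thesis using True a by (simp add: hardthr_def) (smt (verit) zero_le_power2)
  next
    case False
    then have "g\<^sup>2 \<le> (w$r)\<^sup>2" using assms by (metis abs_of_pos abs_le_square_iff not_less)
    moreover have "w$r \<noteq> 0" using False assms by auto
    ultimately show ?thesis using False by (simp add: hardthr_def)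
  qed
  have "(norm (w - hardthr g w))\<^sup>2 + g\<^sup>2 * real (l0 (hardthr g w))
     = (\<Sum>r\<in>UNIV. ((w$r) - (hardthr g w)$r)\<^sup>2 + g\<^sup>2 * (if (hardthr g w)$r \<noteq> 0 then 1 else 0))"
    by (simp add: norm2_vec l0_sum sum.distrib sum_distrib_left)
  also have "\<dots> \<le> (\<Sum>r\<in>UNIV. ((w$r) - z$r)\<^sup>2 + g\<^sup>2 * (if z$r \<noteq> 0 then 1 else 0))"
    by (intro sum_mono pt)
  also have "\<dots> = (norm (w - z))\<^sup>2 + g\<^sup>2 * real (l0 z)"
    by (simp add: norm2_vec l0_sum sum.distrib sum_distrib_left)
  finally show ?thesis .
qed

lemma R_argmin:
  assumes "beta > 0" "\<forall>j. tau j > 0" "gc > 0"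
    and "\<forall>j k. clustcost gc P Om x j (Gm' j) \<le> clustcost gc P Om x j k"
    and "\<forall>j. Z' j = hardthr gc (Om (Gm' j) *v (P j *v x))"
  shows "Rfun beta gc tau P Om x Z' Gm' \<le> Rfun beta gc tau P Om x Z Gm"
proof -
  have "(norm (Om (Gm' j) *v (P j *v x) - Z' j))\<^sup>2 + gc\<^sup>2 * real (l0 (Z' j))
      \<le> (norm (Om (Gm j) *v (P j *v x) - Z j))\<^sup>2 + gc\<^sup>2 * real (l0 (Z j))" for j
  proof -
    have "(norm (Om (Gm' j) *v (P j *v x) - Z' j))\<^sup>2 + gc\<^sup>2 * real (l0 (Z' j)) = clustcost gc P Om x j (Gm' j)"
      using assms(5) by (simp add: clustcost_def Let_def)
    also have "\<dots> \<le> clustcost gc P Om x j (Gm j)" using assms(4) by blast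
    also have "\<dots> \<le> (norm (Om (Gm j) *v (P j *v x) - Z j))\<^sup>2 + gc\<^sup>2 * real (l0 (Z j))"
      unfolding clustcost_def Let_def by (rule hardthr_opt[OF assms(3)])
    finally show ?thesis .
  qed
  then show ?thesis unfolding Rfun_def using assms(1,2)
    by (intro mult_left_mono sum_mono mult_left_mono) (auto simp: less_imp_le)
qed

lemma norm_mid:
  fixes u v :: "'a::real_inner"
  shows "(norm ((1/2) *\<^sub>R (u + v)))\<^sup>2 = ((norm u)\<^sup>2 + (norm v)\<^sup>2)/2 - (norm (u - v))\<^sup>2/4"
  by (simp add: power2_norm_eq_inner inner_add inner_diff inner_commute algebra_simps) (simp add: field_simps)

lemma qsurr_mid:
  assumes "c lb \<ge> 0"
  shows "qsurr h c ((a+b)/2) lb \<le> (qsurr h c a lb + qsurr h c b lb)/2"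
proof -
  have "qsurr h c ((a+b)/2) lb = (qsurr h c a lb + qsurr h c b lb)/2 - c lb * (a-b)\<^sup>2/8"
    by (simp add: qsurr_def power2_eq_square field_simps)
  moreover have "0 \<le> c lb * (a-b)\<^sup>2/8" using assms by simp
  ultimately show ?thesis by linarith
qed

lemma R_mid:
  "Rfun beta gc tau P Om ((1/2) *\<^sub>R (x + y)) Z Gm =
     (Rfun beta gc tau P Om x Z Gm + Rfun beta gc tau P Om y Z Gm)/2
     - beta/4 * (\<Sum>j\<in>UNIV. tau j * (norm (Om (Gm j) *v (P j *v (x - y))))\<^sup>2)"
proof -
  have e: "(norm (Om (Gm j) *v (P j *v ((1/2) *\<^sub>R (x + y))) - Z j))\<^sup>2
     = ((norm (Om (Gm j) *v (P j *v x) - Z j))\<^sup>2 + (norm (Om (Gm j) *v (P j *v y) - Z j))\<^sup>2)/2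
       - (norm (Om (Gm j) *v (P j *v (x - y))))\<^sup>2/4" for j
  proof -
    have h1: "Om (Gm j) *v (P j *v ((1/2) *\<^sub>R (x + y))) - Z j
       = (1/2) *\<^sub>R ((Om (Gm j) *v (P j *v x) - Z j) + (Om (Gm j) *v (P j *v y) - Z j))"
      by (simp add: matrix_vector_mult_scaleR matrix_vector_right_distrib vec_eq_iff field_simps)
    have h2: "(Om (Gm j) *v (P j *v x) - Z j) - (Om (Gm j) *v (P j *v y) - Z j) = Om (Gm j) *v (P j *v (x - y))"
      by (simp add: matrix_vector_mult_diff_distrib)
    show ?thesis by (simp only: h1 norm_mid h2)
  qed
  define a where "a j = tau j * ((norm (Om (Gm j) *v (P j *v x) - Z j))\<^sup>2 + gc\<^sup>2 * real (l0 (Z j)))" for j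
  define b where "b j = tau j * ((norm (Om (Gm j) *v (P j *v y) - Z j))\<^sup>2 + gc\<^sup>2 * real (l0 (Z j)))" for j
  define d where "d j = tau j * (norm (Om (Gm j) *v (P j *v (x - y))))\<^sup>2" for j
  have t: "tau j * ((norm (Om (Gm j) *v (P j *v ((1/2) *\<^sub>R (x + y))) - Z j))\<^sup>2 + gc\<^sup>2 * real (l0 (Z j)))
     = (a j + b j)/2 - d j/4" for j
    unfolding e a_def b_def d_def by (simp add: field_simps)
  have s: "(\<Sum>j\<in>UNIV. (a j + b j)/2 - d j/4) = ((\<Sum>j\<in>UNIV. a j) + (\<Sum>j\<in>UNIV. b j))/2 - (\<Sum>j\<in>UNIV. d j)/4"
    by (simp add: sum_subtractf sum.distrib[symmetric] sum_divide_distrib[symmetric])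
  show ?thesis unfolding Rfun_def t s
    by (simp add: a_def b_def d_def field_simps)
qed

lemma inv_bound:
  fixes Om :: "'k::finite \<Rightarrow> real^'v::finite^'v"
  assumes "\<forall>k. invertible (Om k)"
  shows "\<exists>B>0. \<forall>k w. norm w \<le> B * norm (Om k *v w)"
proof -
  have "\<forall>k. \<exists>M::real^'v^'v. M ** Om k = mat 1"
    using assms by (auto simp: invertible_def)
  then obtain M where M: "\<And>k. M k ** Om k = mat 1" by metis
  have "\<forall>k. \<exists>K>0. \<forall>v. norm (M k *v v) \<le> norm v * K"
    using bounded_linear.pos_bounded[OF matrix_vector_mul_bounded_linear] by blast
  then obtain K where K: "\<And>k. K k > 0" "\<And>k v. norm (M k *v v) \<le> norm v * K k" by metis
  define B where "B = (\<Sum>k\<in>UNIV. K k)"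
  have KB: "K k \<le> B" for k
    unfolding B_def by (rule member_le_sum) (auto intro: less_imp_le K)
  have "B > 0" using KB[of undefined] K(1)[of undefined] by linarith
  moreover have "norm w \<le> B * norm (Om k *v w)" for k w
  proof -
    have "w = M k *v (Om k *v w)" by (simp add: matrix_vector_mul_assoc M)
    then have "norm w \<le> norm (Om k *v w) * K k" using K(2) by metis
    also have "\<dots> \<le> B * norm (Om k *v w)" using KB[of k] by (simp add: mult.commute mult_right_mono)
    finally show ?thesis .
  qed
  ultimately show ?thesis by blast
qed

lemma cover_bound:
  fixes P :: "'j::finite \<Rightarrow> real^'p::finite^'v::finite"
  assumes "\<forall>q. \<exists>j r. P j $ r = axis q 1"
  shows "(norm d)\<^sup>2 \<le> real CARD('p) * (\<Sum>j\<in>UNIV. (norm (P j *v d))\<^sup>2)"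
proof -
  have q: "(d $ q)\<^sup>2 \<le> (\<Sum>j\<in>UNIV. (norm (P j *v d))\<^sup>2)" for q
  proof -
    obtain j r where jr: "P j $ r = axis q 1" using assms by blast
    have "(P j *v d) $ r = d $ q" by (simp add: matrix_vector_mul_component jr inner_axis')
    then have "(d $ q)\<^sup>2 \<le> (norm (P j *v d))\<^sup>2"
      by (metis abs_ge_zero component_le_norm_cart power2_abs power_mono)
    also have "\<dots> \<le> (\<Sum>j\<in>UNIV. (norm (P j *v d))\<^sup>2)"
      by (rule member_le_sum) auto
    finally show ?thesis .
  qed
  have "(norm d)\<^sup>2 = (\<Sum>q\<in>UNIV. (d $ q)\<^sup>2)" by (rule norm2_vec)
  also have "\<dots> \<le> (\<Sum>q\<in>(UNIV::'p set). (\<Sum>j\<in>UNIV. (norm (P j *v d))\<^sup>2))"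
    by (intro sum_mono q)
  also have "\<dots> = real CARD('p) * (\<Sum>j\<in>UNIV. (norm (P j *v d))\<^sup>2)" by simp
  finally show ?thesis .
qed

lemma coerc:
  fixes P :: "'j::finite \<Rightarrow> real^'p::finite^'v::finite" and Om :: "'k::finite \<Rightarrow> real^'v^'v"
  assumes "\<forall>j. tau j > 0" "\<forall>k. invertible (Om k)" "\<forall>q. \<exists>j r. P j $ r = axis q 1"
  shows "\<exists>kap>0. \<forall>(Gm::'j \<Rightarrow> 'k) d. kap * (norm d)\<^sup>2 \<le> (\<Sum>j\<in>UNIV. tau j * (norm (Om (Gm j) *v (P j *v d)))\<^sup>2)"
proof -
  obtain B where B: "B > 0" "\<And>k w. norm w \<le> B * norm (Om k *v w)" using inv_bound[OF assms(2)] by blast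
  define tm where "tm = Min (range tau)"
  have tm: "tm > 0" "\<And>j. tm \<le> tau j"
    using assms(1) Min_in[of "range tau"] by (auto simp: tm_def)
  define kap where "kap = tm / (B\<^sup>2 * real CARD('p))"
  have "kap > 0" using tm B by (simp add: kap_def)
  moreover have "kap * (norm d)\<^sup>2 \<le> (\<Sum>j\<in>UNIV. tau j * (norm (Om (Gm j) *v (P j *v d)))\<^sup>2)" for Gm d
  proof -
    have "kap * (norm d)\<^sup>2 \<le> kap * (real CARD('p) * (\<Sum>j\<in>UNIV. (norm (P j *v d))\<^sup>2))"
      using cover_bound[OF assms(3)] \<open>kap > 0\<close> by (simp add: mult_left_mono)
    also have "\<dots> = (\<Sum>j\<in>UNIV. tm * ((norm (P j *v d))\<^sup>2 / B\<^sup>2))"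
      using B(1) by (simp add: kap_def sum_distrib_left sum_divide_distrib field_simps)
    also have "\<dots> \<le> (\<Sum>j\<in>UNIV. tau j * (norm (Om (Gm j) *v (P j *v d)))\<^sup>2)"
    proof (intro sum_mono mult_mono)
      fix j
      show "tm \<le> tau j" by (rule tm(2))
      have "norm (P j *v d) \<le> B * norm (Om (Gm j) *v (P j *v d))" by (rule B(2))
      then have "(norm (P j *v d))\<^sup>2 \<le> (B * norm (Om (Gm j) *v (P j *v d)))\<^sup>2"
        by (simp add: power_mono)
      then show "(norm (P j *v d))\<^sup>2 / B\<^sup>2 \<le> (norm (Om (Gm j) *v (P j *v d)))\<^sup>2"
        using B(1) by (simp add: divide_le_eq power_mult_distrib mult.commute)
    qed (use tm assms(1) in \<open>auto simp: less_imp_le\<close>)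
    finally show ?thesis .
  qed
  ultimately show ?thesis by blast
qed

lemma hardthr_gap: "hardthr g w $ r = 0 \<or> g \<le> \<bar>hardthr g w $ r\<bar>"
  by (simp add: hardthr_def)

lemma l0_event:
  fixes zk :: "nat \<Rightarrow> real^'v::finite"
  assumes "zk \<longlonglongrightarrow> z" "eventually (\<lambda>n. \<forall>r. zk n $ r = 0 \<or> g \<le> \<bar>zk n $ r\<bar>) sequentially" "g > 0"
  shows "eventually (\<lambda>n. l0 (zk n) = l0 z) sequentially"
proof -
  have "eventually (\<lambda>n. (zk n $ r = 0) = (z $ r = 0)) sequentially" for r
  proof -
    have t: "(\<lambda>n. zk n $ r) \<longlonglongrightarrow> z $ r" by (intro tendsto_vec_nth assms(1))
    show ?thesis
    proof (cases "z $ r = 0")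
      case True
      then have "eventually (\<lambda>n. dist (zk n $ r) 0 < g) sequentially"
        using t assms(3) by (auto simp: tendsto_iff)
      from eventually_conj[OF this assms(2)] show ?thesis
        by (rule eventually_mono) (use True in \<open>force simp: dist_real_def\<close>)
    next
      case False
      then have "eventually (\<lambda>n. dist (zk n $ r) (z $ r) < \<bar>z $ r\<bar>) sequentially"
        using t by (auto simp: tendsto_iff)
      then show ?thesis
        by (rule eventually_mono) (use False in \<open>auto simp: dist_real_def\<close>)
    qed
  qed
  then have "eventually (\<lambda>n. \<forall>r. (zk n $ r = 0) = (z $ r = 0)) sequentially"
    by (rule eventually_all_finite)
  then show ?thesis by eventually_elim (simp add: l0_def)
qed

lemma tendsto_R:
  assumes "yk \<longlonglongrightarrow> y" "\<forall>j. (\<lambda>n. Zk n j) \<longlonglongrightarrow> Z j"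
    and "eventually (\<lambda>n. \<forall>j. l0 (Zk n j) = l0 (Z j)) sequentially"
  shows "(\<lambda>n. Rfun beta gc tau P Om (yk n) (Zk n) Gm) \<longlonglongrightarrow> Rfun beta gc tau P Om y Z Gm"
proof -
  have l: "(\<lambda>n. real (l0 (Zk n j))) \<longlonglongrightarrow> real (l0 (Z j))" for j
    using assms(3) by (intro tendsto_eventually) (auto elim: eventually_mono)
  have v: "(\<lambda>n. Om (Gm j) *v (P j *v yk n) - Zk n j) \<longlonglongrightarrow> Om (Gm j) *v (P j *v y) - Z j" for j
    by (intro tendsto_diff tendsto_Av assms(1) assms(2)[rule_format])
  show ?thesis unfolding Rfun_def
    by (intro tendsto_mult tendsto_const tendsto_sum tendsto_add tendsto_power tendsto_norm v l)
qed

lemma isCont_Lfun: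
  assumes "I0 > 0" "sigma2 \<ge> 0"
  shows "isCont (Lfun I0 sigma2 Y s1 s2 A) x"
  by (rule continuous_at_sequentiallyI) (rule tendsto_Lfun[OF assms])

lemma Rfun_nonneg:
  assumes "beta > 0" "\<forall>j. tau j > 0"
  shows "0 \<le> Rfun beta gc tau P Om x Z Gm"
  unfolding Rfun_def using assms by (auto intro!: mult_nonneg_nonneg sum_nonneg simp: less_imp_le)

lemma tendsto_qsum:
  assumes "I0 > 0" "sigma2 \<ge> 0" "\<forall>i q. 0 \<le> A $ i $ q"
    and "\<forall>i. continuous_on {0..} (c i)"
    and "yk \<longlonglongrightarrow> y" "xbk \<longlonglongrightarrow> xb" "\<forall>n. xbk n \<in> Xset xmax" "xb \<in> Xset xmax"
  shows "(\<lambda>n. \<Sum>i\<in>UNIV. qsurr (hfun I0 sigma2 (Y i) (s1 i) (s2 i)) (c i) ((A *v yk n) $ i) ((A *v xbk n) $ i))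
     \<longlonglongrightarrow> (\<Sum>i\<in>UNIV. qsurr (hfun I0 sigma2 (Y i) (s1 i) (s2 i)) (c i) ((A *v y) $ i) ((A *v xb) $ i))"
proof (intro tendsto_sum)
  fix i
  have ly: "(\<lambda>n. (A *v yk n) $ i) \<longlonglongrightarrow> (A *v y) $ i" by (intro tendsto_vec_nth tendsto_Av assms(5))
  have lb: "(\<lambda>n. (A *v xbk n) $ i) \<longlonglongrightarrow> (A *v xb) $ i" by (intro tendsto_vec_nth tendsto_Av assms(6))
  have th: "(\<lambda>n. hfun I0 sigma2 (Y i) (s1 i) (s2 i) ((A *v xbk n) $ i)) \<longlonglongrightarrow> hfun I0 sigma2 (Y i) (s1 i) (s2 i) ((A *v xb) $ i)"
    by (rule isCont_tendsto_compose[OF hfun_cont[OF assms(1,2)] lb])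
  have td: "(\<lambda>n. hD I0 sigma2 (Y i) (s1 i) (s2 i) ((A *v xbk n) $ i)) \<longlonglongrightarrow> hD I0 sigma2 (Y i) (s1 i) (s2 i) ((A *v xb) $ i)"
    by (rule isCont_tendsto_compose[OF hD_cont[OF assms(1,2)] lb])
  have tc: "(\<lambda>n. c i ((A *v xbk n) $ i)) \<longlonglongrightarrow> c i ((A *v xb) $ i)"
    by (rule continuous_on_tendsto_compose[OF assms(4)[rule_format] lb])
       (use l_nonneg[OF assms(3) assms(8)] l_nonneg[OF assms(3) assms(7)[rule_format]] in auto)
  show "(\<lambda>n. qsurr (hfun I0 sigma2 (Y i) (s1 i) (s2 i)) (c i) ((A *v yk n) $ i) ((A *v xbk n) $ i))
     \<longlonglongrightarrow> qsurr (hfun I0 sigma2 (Y i) (s1 i) (s2 i)) (c i) ((A *v y) $ i) ((A *v xb) $ i)"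
    unfolding qsurr_def deriv_hfun[OF assms(1,2)]
    by (intro tendsto_intros th td tc ly lb)
qed

lemma E_deriv:
  fixes A :: "real^'p::finite^'d::finite"
  assumes "I0 > 0" "sigma2 \<ge> 0"
  shows "((\<lambda>y. \<Sum>i\<in>UNIV. qsurr (hfun I0 sigma2 (Y i) (s1 i) (s2 i)) (c i) ((A *v y) $ i) ((A *v x) $ i)
                 - hfun I0 sigma2 (Y i) (s1 i) (s2 i) ((A *v y) $ i)) has_derivative (\<lambda>_. 0)) (at x)"
proof -
  have i: "((\<lambda>y. qsurr (hfun I0 sigma2 (Y i) (s1 i) (s2 i)) (c i) ((A *v y) $ i) ((A *v x) $ i)
                 - hfun I0 sigma2 (Y i) (s1 i) (s2 i) ((A *v y) $ i)) has_derivative (\<lambda>_. 0)) (at x)" for i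
  proof -
    let ?h = "hfun I0 sigma2 (Y i) (s1 i) (s2 i)"
    let ?lb = "(A *v x) $ i"
    have d: "((\<lambda>t. qsurr ?h (c i) t ?lb - ?h t) has_real_derivative
        (hD I0 sigma2 (Y i) (s1 i) (s2 i) ?lb * 1 + 1/2 * c i ?lb * (2 * (?lb - ?lb) * 1)) - hD I0 sigma2 (Y i) (s1 i) (s2 i) ?lb) (at ?lb)"
      unfolding qsurr_def deriv_hfun[OF assms]
      by (intro DERIV_diff DERIV_add DERIV_const DERIV_cmult hfun_deriv[OF assms] DERIV_ident
            DERIV_power[where n=2, simplified] ) (auto intro!: derivative_eq_intros)
    have z: "((*) (0::real)) = (\<lambda>t. 0)" by auto
    have d0: "((\<lambda>t. qsurr ?h (c i) t ?lb - ?h t) has_derivative (\<lambda>t. 0)) (at ?lb)"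
      using d unfolding has_field_derivative_def by (simp add: z)
    have bl: "bounded_linear (\<lambda>y. (A *v y) $ i)"
      by (rule bounded_linear_compose[OF bounded_linear_vec_nth matrix_vector_mul_bounded_linear])
    from has_derivative_compose[OF bounded_linear_imp_has_derivative[OF bl] d0]
    show ?thesis by simp
  qed
  show ?thesis
    using has_derivative_sum[of UNIV "\<lambda>i y. qsurr (hfun I0 sigma2 (Y i) (s1 i) (s2 i)) (c i) ((A *v y) $ i) ((A *v x) $ i)
                 - hfun I0 sigma2 (Y i) (s1 i) (s2 i) ((A *v y) $ i)" "\<lambda>i _. 0" "at x"] i
    by simp
qed

lemma bounded_hardthr:
  assumes "bounded T"
  shows "bounded (hardthr g ` T)"
proof -
  obtain a where a: "\<forall>x\<in>T. norm x \<le> a" using assms by (auto simp: bounded_iff)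
  have "norm (hardthr g x) \<le> norm x" for x
    by (rule norm_le_componentwise_cart) (simp add: hardthr_def)
  then show ?thesis using a unfolding bounded_iff by (intro exI[of _ a]) (auto intro: order_trans)
qed

theorem theorem1:
  fixes A :: "real^'p::finite^'d::finite"
    and I0 sigma2 xmax beta gc :: real
    and Y s1 s2 :: "'d \<Rightarrow> real"
    and c :: "'d \<Rightarrow> real \<Rightarrow> real"
    and P :: "'j::finite \<Rightarrow> real^'p^'v::finite"
    and Om :: "'k::finite \<Rightarrow> real^'v^'v"
    and tau :: "'j \<Rightarrow> real"
    and xs :: "nat \<Rightarrow> real^'p"
    and Zs :: "nat \<Rightarrow> 'j \<Rightarrow> real^'v"
    and Gs :: "nat \<Rightarrow> 'j \<Rightarrow> 'k"
  defines "G \<equiv> Gobj I0 sigma2 Y s1 s2 A beta gc tau P Om xmax"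
    and "F \<equiv> Fmaj I0 sigma2 Y s1 s2 c A beta gc tau P Om xmax"
    and "h \<equiv> (\<lambda>i. hfun I0 sigma2 (Y i) (s1 i) (s2 i))"
  assumes A_nonneg: "\<forall>i q. 0 \<le> A $ i $ q"
    and I0_pos: "I0 > 0" and sigma2_nonneg: "sigma2 \<ge> 0" and xmax_pos: "xmax > 0"
    and beta_pos: "beta > 0" and gc_pos: "gc > 0" and tau_pos: "\<forall>j. tau j > 0"
    and P_rows: "\<forall>j r. \<exists>q. P j $ r = axis q 1"
    and P_distinct: "\<forall>j. inj (\<lambda>r. P j $ r)"
    and P_cover: "\<forall>q. \<exists>j r. P j $ r = axis q 1"
    and Om_inv: "\<forall>k. invertible (Om k)"
    and c_cont: "\<forall>i. continuous_on {0..} (c i)"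
    and c_pos: "\<forall>i l. 0 \<le> l \<longrightarrow> c i l > 0"
    and c_maj: "\<forall>i l lb. 0 \<le> l \<longrightarrow> 0 \<le> lb \<longrightarrow> h i l \<le> qsurr (h i) (c i) l lb"
    and init: "xs 0 \<in> Xset xmax"
    and x_update: "\<forall>n y. F (xs (Suc n)) (Zs n) (Gs n) (xs n) \<le> F y (Zs n) (Gs n) (xs n)"
    and Gamma_update: "\<forall>n j k. clustcost gc P Om (xs (Suc n)) j (Gs (Suc n) j)
                                \<le> clustcost gc P Om (xs (Suc n)) j k"
    and Z_update: "\<forall>n j. Zs (Suc n) j = hardthr gc (Om (Gs (Suc n) j) *v (P j *v xs (Suc n)))"
  shows "(bounded (range xs) \<and> (\<forall>j. bounded (range (\<lambda>n. Zs n j))))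
    \<and> (\<forall>n. G (xs (Suc n)) (Zs (Suc n)) (Gs (Suc n)) \<le> G (xs n) (Zs n) (Gs n))
    \<and> (\<exists>Gst::real. (\<lambda>n. G (xs n) (Zs n) (Gs n)) \<longlonglongrightarrow> ereal Gst \<and>
           (\<forall>xst Zst Gmst. is_accum_pt xs Zs Gs xst Zst Gmst \<longrightarrow> G xst Zst Gmst = ereal Gst))
    \<and> (\<forall>xst Zst Gmst. is_accum_pt xs Zs Gs xst Zst Gmst \<longrightarrow>
           0 \<in> limiting_subdiff (\<lambda>x. G x Zst Gmst) xst \<and>
           (\<forall>Z Gm. G xst Zst Gmst \<le> G xst Z Gm))
    \<and> ((\<lambda>n. norm (xs (Suc n) - xs n)) \<longlonglongrightarrow> 0)"
proof -
  let ?X = "Xset xmax"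
  define Lx where "Lx = Lfun I0 sigma2 Y s1 s2 A"
  define R where "R = Rfun beta gc tau P Om"
  define S where "S xb Z Gm y = (\<Sum>i\<in>UNIV. qsurr (h i) (c i) ((A *v y) $ i) ((A *v xb) $ i)) + R y Z Gm" for xb Z Gm y
  define g where "g n = Lx (xs n) + R (xs n) (Zs n) (Gs n)" for n
  have F_eq: "F y Z Gm xb = (if y \<in> ?X then ereal (S xb Z Gm y) else \<infinity>)" for y Z Gm xb
    by (simp add: F_def Fmaj_def S_def R_def h_def)
  have G_eq: "G y Z Gm = (if y \<in> ?X then ereal (Lx y + R y Z Gm) else \<infinity>)" for y Z Gm
    by (simp add: G_def Gobj_def Lx_def R_def)
  have X0: "0 \<in> ?X" using xmax_pos by (simp add: Xset_def)
  have inX: "xs n \<in> ?X" for n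
  proof (cases n)
    case 0 then show ?thesis using init by simp
  next
    case (Suc m)
    have "F (xs (Suc m)) (Zs m) (Gs m) (xs m) \<le> F 0 (Zs m) (Gs m) (xs m)" using x_update by blast
    then show ?thesis using Suc X0 by (auto simp: F_eq split: if_splits)
  qed
  have xupd: "S (xs n) (Zs n) (Gs n) (xs (Suc n)) \<le> S (xs n) (Zs n) (Gs n) y" if "y \<in> ?X" for n y
    using x_update[rule_format, of n y] that inX[of "Suc n"] by (simp add: F_eq)
  have Sself: "S x Z Gm x = Lx x + R x Z Gm" for x Z Gm
    by (simp add: S_def Lx_def Lfun_def qsurr_def h_def)
  have Smaj: "Lx y + R y Z Gm \<le> S xb Z Gm y" if "y \<in> ?X" "xb \<in> ?X" for y xb Z Gm
  proof -
    have "Lx y \<le> (\<Sum>i\<in>UNIV. qsurr (h i) (c i) ((A *v y) $ i) ((A *v xb) $ i))"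
      unfolding Lx_def Lfun_def
      by (intro sum_mono) (use c_maj l_nonneg[OF A_nonneg that(1)] l_nonneg[OF A_nonneg that(2)] in \<open>simp add: h_def\<close>)
    then show ?thesis by (simp add: S_def)
  qed
  have Rarg: "R (xs (Suc n)) (Zs (Suc n)) (Gs (Suc n)) \<le> R (xs (Suc n)) Z Gm" for n Z Gm
    unfolding R_def
    by (rule R_argmin[OF beta_pos tau_pos gc_pos]) (use Gamma_update Z_update in auto)
  have gmono: "g (Suc n) \<le> g n" for n
  proof -
    have "g (Suc n) \<le> Lx (xs (Suc n)) + R (xs (Suc n)) (Zs n) (Gs n)"
      using Rarg[of n "Zs n" "Gs n"] by (simp add: g_def)
    also have "\<dots> \<le> S (xs n) (Zs n) (Gs n) (xs (Suc n))" by (rule Smaj[OF inX inX])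
    also have "\<dots> \<le> S (xs n) (Zs n) (Gs n) (xs n)" by (rule xupd[OF inX])
    also have "\<dots> = g n" by (simp add: Sself g_def)
    finally show ?thesis .
  qed
  have Gg: "G (xs n) (Zs n) (Gs n) = ereal (g n)" for n
    using inX[of n] by (simp add: G_eq g_def)
  obtain kap where kap: "kap > 0"
    "\<And>Gm d. kap * (norm d)\<^sup>2 \<le> (\<Sum>j\<in>UNIV. tau j * (norm (Om (Gm j) *v (P j *v d)))\<^sup>2)"
    using coerc[OF tau_pos Om_inv P_cover] by blast
  have cnn: "0 \<le> c i ((A *v x) $ i)" if "x \<in> ?X" for i x
    using c_pos l_nonneg[OF A_nonneg that] by (simp add: less_imp_le)
  have Smid: "S xb Z Gm ((1/2) *\<^sub>R (x + y)) \<le> (S xb Z Gm x + S xb Z Gm y)/2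
       - beta/4 * (\<Sum>j\<in>UNIV. tau j * (norm (Om (Gm j) *v (P j *v (x - y))))\<^sup>2)" if "xb \<in> ?X" for xb Z Gm x y
  proof -
    have q: "qsurr (h i) (c i) ((A *v ((1/2) *\<^sub>R (x + y))) $ i) ((A *v xb) $ i)
       \<le> (qsurr (h i) (c i) ((A *v x) $ i) ((A *v xb) $ i) + qsurr (h i) (c i) ((A *v y) $ i) ((A *v xb) $ i))/2" for i
    proof -
      have e: "(A *v ((1/2) *\<^sub>R (x + y))) $ i = ((A *v x) $ i + (A *v y) $ i)/2"
        by (simp add: matrix_vector_mult_scaleR matrix_vector_right_distrib)
      show ?thesis using qsurr_mid[of "c i" "(A *v xb) $ i", OF cnn[OF that, of i]] unfolding e .
    qed
    have "(\<Sum>i\<in>UNIV. qsurr (h i) (c i) ((A *v ((1/2) *\<^sub>R (x + y))) $ i) ((A *v xb) $ i))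
       \<le> (\<Sum>i\<in>UNIV. (qsurr (h i) (c i) ((A *v x) $ i) ((A *v xb) $ i) + qsurr (h i) (c i) ((A *v y) $ i) ((A *v xb) $ i))/2)"
      by (intro sum_mono q)
    also have "\<dots> = ((\<Sum>i\<in>UNIV. qsurr (h i) (c i) ((A *v x) $ i) ((A *v xb) $ i)) + (\<Sum>i\<in>UNIV. qsurr (h i) (c i) ((A *v y) $ i) ((A *v xb) $ i)))/2"
      by (simp add: sum.distrib[symmetric] sum_divide_distrib[symmetric])
    finally show ?thesis unfolding S_def R_def R_mid by (simp add: field_simps)
  qed
  have strong: "beta * kap / 2 * (norm (xs n - xs (Suc n)))\<^sup>2 \<le> g n - g (Suc n)" for n
  proof -
    let ?x = "xs n" and ?p = "xs (Suc n)"
    let ?S = "S (xs n) (Zs n) (Gs n)"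
    have "?S ?p \<le> ?S ((1/2) *\<^sub>R (?x + ?p))" by (rule xupd[OF Xset_mid[OF inX inX]])
    also have "\<dots> \<le> (?S ?x + ?S ?p)/2 - beta/4 * (\<Sum>j\<in>UNIV. tau j * (norm (Om (Gs n j) *v (P j *v (?x - ?p))))\<^sup>2)"
      by (rule Smid[OF inX])
    also have "\<dots> \<le> (?S ?x + ?S ?p)/2 - beta/4 * (kap * (norm (?x - ?p))\<^sup>2)"
      using kap(2)[of "?x - ?p" "Gs n"] beta_pos by simp
    finally have "beta * kap / 2 * (norm (?x - ?p))\<^sup>2 \<le> ?S ?x - ?S ?p" by (simp add: field_simps)
    moreover have "?S ?x = g n" by (simp add: Sself g_def)
    moreover have "g (Suc n) \<le> ?S ?p"
      using Rarg[of n "Zs n" "Gs n"] Smaj[OF inX[of "Suc n"] inX[of n], of "Zs n" "Gs n"] by (simp add: g_def)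
    ultimately show ?thesis by linarith
  qed
  have Lbound: "\<exists>B. \<forall>y\<in>?X. B \<le> Lx y"
  proof -
    have "\<exists>x\<in>?X. \<forall>y\<in>?X. Lx x \<le> Lx y"
      unfolding Lx_def
      by (rule continuous_attains_inf) (use X0 isCont_Lfun[OF I0_pos sigma2_nonneg] in
          \<open>auto simp: Xset_cbox intro!: continuous_at_imp_continuous_on\<close>)
    then show ?thesis by blast
  qed
  then obtain B where B: "\<And>y. y \<in> ?X \<Longrightarrow> B \<le> Lx y" by blast
  have gB: "B \<le> g n" for n
    using B[OF inX[of n]] Rfun_nonneg[OF beta_pos tau_pos, of gc P Om "xs n" "Zs n" "Gs n"] by (simp add: g_def R_def)
  have "decseq g" using gmono by (simp add: decseq_SucI)
  then obtain Gst where Gst: "g \<longlonglongrightarrow> Gst" using decseq_convergent[of g B] gB by blast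
  have diff0: "(\<lambda>n. norm (xs (Suc n) - xs n)) \<longlonglongrightarrow> 0"
  proof (rule tendsto_sandwich)
    show "eventually (\<lambda>n. 0 \<le> norm (xs (Suc n) - xs n)) sequentially" by simp
    show "eventually (\<lambda>n. norm (xs (Suc n) - xs n) \<le> sqrt (2 / (beta * kap) * (g n - g (Suc n)))) sequentially"
    proof (intro always_eventually allI)
      fix n
      have "(norm (xs (Suc n) - xs n))\<^sup>2 \<le> 2 / (beta * kap) * (g n - g (Suc n))"
        using strong[of n] beta_pos kap(1) by (simp add: norm_minus_commute field_simps)
      then show "norm (xs (Suc n) - xs n) \<le> sqrt (2 / (beta * kap) * (g n - g (Suc n)))"
        using real_le_rsqrt by blast
    qed
    have "(\<lambda>n. g n - g (Suc n)) \<longlonglongrightarrow> Gst - Gst" by (intro tendsto_diff Gst LIMSEQ_Suc)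
    from tendsto_real_sqrt[OF tendsto_mult_left[OF this, of "2 / (beta * kap)"]]
    have "(\<lambda>n. sqrt (2 / (beta * kap) * (g n - g (Suc n)))) \<longlonglongrightarrow> sqrt (2 / (beta * kap) * (Gst - Gst))" .
    then show "(\<lambda>n. sqrt (2 / (beta * kap) * (g n - g (Suc n)))) \<longlonglongrightarrow> 0" by simp
  qed (rule tendsto_const)
  have closedX: "closed ?X" by (simp add: Xset_cbox closed_cbox)
  have acc: "G xst Zst Gmst = ereal Gst \<and> 0 \<in> limiting_subdiff (\<lambda>x. G x Zst Gmst) xst \<and>
           (\<forall>Z Gm. G xst Zst Gmst \<le> G xst Z Gm)" if ap: "is_accum_pt xs Zs Gs xst Zst Gmst" for xst Zst Gmst
  proof -
    obtain r where r: "strict_mono r" and xr: "(\<lambda>n. xs (r n)) \<longlonglongrightarrow> xst"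
      and zr: "\<forall>j. (\<lambda>n. Zs (r n) j) \<longlonglongrightarrow> Zst j" and gr: "eventually (\<lambda>n. Gs (r n) = Gmst) sequentially"
      using ap unfolding is_accum_pt_def by blast
    have xstX: "xst \<in> ?X" by (rule closed_sequentially[OF closedX inX xr])
    have ev1: "eventually (\<lambda>n. 1 \<le> r n) sequentially"
      unfolding eventually_sequentially using seq_suble[OF r] by (metis order_trans)
    have evgap: "eventually (\<lambda>n. \<forall>q. Zs (r n) j $ q = 0 \<or> gc \<le> \<bar>Zs (r n) j $ q\<bar>) sequentially" for j
      using ev1
    proof (rule eventually_mono)
      fix n assume "1 \<le> r n"
      then have "r n = Suc (r n - 1)" by simp
      then have "Zs (r n) j = hardthr gc (Om (Gs (r n) j) *v (P j *v xs (r n)))" using Z_update by metis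
      then show "\<forall>q. Zs (r n) j $ q = 0 \<or> gc \<le> \<bar>Zs (r n) j $ q\<bar>" using hardthr_gap by metis
    qed
    have evl0: "eventually (\<lambda>n. \<forall>j. l0 (Zs (r n) j) = l0 (Zst j)) sequentially"
      by (rule eventually_all_finite) (rule l0_event[OF zr[rule_format] evgap gc_pos])
    have Rconv: "(\<lambda>n. R (xs (r n)) (Zs (r n)) Gmst) \<longlonglongrightarrow> R xst Zst Gmst"
      unfolding R_def by (rule tendsto_R[OF xr zr evl0])
    have Rconv2: "(\<lambda>n. R (xs (r n)) Z Gm) \<longlonglongrightarrow> R xst Z Gm" for Z Gm
      unfolding R_def by (rule tendsto_R[OF xr]) auto
    have Lconv: "(\<lambda>n. Lx (xs (r n))) \<longlonglongrightarrow> Lx xst"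
      unfolding Lx_def by (rule tendsto_Lfun[OF I0_pos sigma2_nonneg xr])
    have "(\<lambda>n. Lx (xs (r n)) + R (xs (r n)) (Zs (r n)) Gmst) \<longlonglongrightarrow> Lx xst + R xst Zst Gmst"
      by (intro tendsto_add Lconv Rconv)
    moreover have "eventually (\<lambda>n. Lx (xs (r n)) + R (xs (r n)) (Zs (r n)) Gmst = g (r n)) sequentially"
      using gr by (rule eventually_mono) (simp add: g_def)
    ultimately have g1: "(\<lambda>n. g (r n)) \<longlonglongrightarrow> Lx xst + R xst Zst Gmst" by (rule Lim_transform_eventually)
    have g2: "(\<lambda>n. g (r n)) \<longlonglongrightarrow> Gst" using LIMSEQ_subseq_LIMSEQ[OF Gst r] by (simp add: o_def)
    have eqG: "Lx xst + R xst Zst Gmst = Gst" using LIMSEQ_unique[OF g1 g2] .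
    have part1: "G xst Zst Gmst = ereal Gst" using xstX eqG by (simp add: G_eq)
    have Ropt: "R xst Zst Gmst \<le> R xst Z Gm" for Z Gm
    proof (rule tendsto_le[OF trivial_limit_sequentially Rconv2 Rconv])
      show "eventually (\<lambda>n. R (xs (r n)) (Zs (r n)) Gmst \<le> R (xs (r n)) Z Gm) sequentially"
        using eventually_conj[OF ev1 gr]
      proof (rule eventually_mono)
        fix n assume n: "1 \<le> r n \<and> Gs (r n) = Gmst"
        then have rn: "r n = Suc (r n - 1)" by simp
        have "R (xs (Suc (r n - 1))) (Zs (Suc (r n - 1))) (Gs (Suc (r n - 1))) \<le> R (xs (Suc (r n - 1))) Z Gm"
          by (rule Rarg)
        then show "R (xs (r n)) (Zs (r n)) Gmst \<le> R (xs (r n)) Z Gm" using n rn by metis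
      qed
    qed
    have part3: "\<forall>Z Gm. G xst Zst Gmst \<le> G xst Z Gm"
      using xstX Ropt by (simp add: G_eq)
    have dr: "(\<lambda>n. norm (xs (Suc (r n)) - xs (r n))) \<longlonglongrightarrow> 0"
      using LIMSEQ_subseq_LIMSEQ[OF diff0 r] by (simp add: o_def)
    then have "(\<lambda>n. xs (Suc (r n)) - xs (r n)) \<longlonglongrightarrow> 0" by (simp add: tendsto_norm_zero_iff)
    from tendsto_add[OF xr this] have xr1: "(\<lambda>n. xs (Suc (r n))) \<longlonglongrightarrow> xst" by simp
    have xrX: "\<forall>n. xs (r n) \<in> ?X" using inX by blast
    have Sconv: "(\<lambda>n. S (xs (r n)) (Zs (r n)) Gmst (yk n)) \<longlonglongrightarrow> S xst Zst Gmst y" if yk: "yk \<longlonglongrightarrow> y" for yk y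
    proof -
      have "(\<lambda>n. \<Sum>i\<in>UNIV. qsurr (hfun I0 sigma2 (Y i) (s1 i) (s2 i)) (c i) ((A *v yk n) $ i) ((A *v xs (r n)) $ i))
         \<longlonglongrightarrow> (\<Sum>i\<in>UNIV. qsurr (hfun I0 sigma2 (Y i) (s1 i) (s2 i)) (c i) ((A *v y) $ i) ((A *v xst) $ i))"
        by (rule tendsto_qsum[OF I0_pos sigma2_nonneg A_nonneg c_cont yk xr xrX xstX])
      moreover have "(\<lambda>n. R (yk n) (Zs (r n)) Gmst) \<longlonglongrightarrow> R y Zst Gmst"
        unfolding R_def by (rule tendsto_R[OF yk zr evl0])
      ultimately show ?thesis using tendsto_add by (simp add: S_def h_def)
    qed
    have Smin: "S xst Zst Gmst xst \<le> S xst Zst Gmst y" if yX: "y \<in> ?X" for y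
    proof (rule tendsto_le[OF trivial_limit_sequentially Sconv[OF tendsto_const] Sconv[OF xr1]])
      show "eventually (\<lambda>n. S (xs (r n)) (Zs (r n)) Gmst (xs (Suc (r n))) \<le> S (xs (r n)) (Zs (r n)) Gmst y) sequentially"
        using gr by (rule eventually_mono) (use xupd[OF yX] in metis)
    qed
    define E where "E y = (\<Sum>i\<in>UNIV. qsurr (hfun I0 sigma2 (Y i) (s1 i) (s2 i)) (c i) ((A *v y) $ i) ((A *v xst) $ i)
                 - hfun I0 sigma2 (Y i) (s1 i) (s2 i) ((A *v y) $ i))" for y
    have Ed: "(E has_derivative (\<lambda>_. 0)) (at xst)"
      unfolding E_def by (rule E_deriv[OF I0_pos sigma2_nonneg])
    have E0: "E xst = 0" by (simp add: E_def qsurr_def)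
    have SE: "S xst Zst Gmst y = Lx y + E y + R y Zst Gmst" for y
      by (simp add: S_def E_def Lx_def Lfun_def h_def sum_subtractf)
    have fr: "0 \<in> frechet_subdiff (\<lambda>x. G x Zst Gmst) xst"
      unfolding frechet_subdiff_def
    proof (intro CollectI conjI allI impI)
      show "\<bar>G xst Zst Gmst\<bar> \<noteq> \<infinity>" using part1 by simp
      fix e :: real assume e: "e > 0"
      obtain d where d: "d > 0" "\<And>y. norm (y - xst) < d \<Longrightarrow> norm (E y - E xst - 0) \<le> e * norm (y - xst)"
        using Ed e unfolding has_derivative_at_alt by blast
      show "\<exists>d>0. \<forall>y. norm (y - xst) < d \<longrightarrow>
          G xst Zst Gmst + ereal (inner 0 (y - xst) - e * norm (y - xst)) \<le> G y Zst Gmst"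
      proof (intro exI[of _ d] conjI allI impI d(1))
        fix y assume yd: "norm (y - xst) < d"
        show "G xst Zst Gmst + ereal (inner 0 (y - xst) - e * norm (y - xst)) \<le> G y Zst Gmst"
        proof (cases "y \<in> ?X")
          case False then show ?thesis by (simp add: G_eq)
        next
          case True
          have "Lx xst + R xst Zst Gmst = S xst Zst Gmst xst" by (simp add: Sself)
          also have "\<dots> \<le> S xst Zst Gmst y" by (rule Smin[OF True])
          also have "\<dots> = Lx y + E y + R y Zst Gmst" by (rule SE)
          finally have "Lx xst + R xst Zst Gmst - e * norm (y - xst) \<le> Lx y + R y Zst Gmst"
            using d(2)[OF yd] E0 by (simp add: abs_le_iff)
          then show ?thesis using True xstX by (simp add: G_eq)
        qed
      qed
    qed
    have part2: "0 \<in> limiting_subdiff (\<lambda>x. G x Zst Gmst) xst"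
      unfolding limiting_subdiff_def
      by (rule CollectI, rule exI[of _ "\<lambda>_. xst"], rule exI[of _ "\<lambda>_. 0"]) (use fr in auto)
    show ?thesis using part1 part2 part3 by blast
  qed
  have bx: "bounded (range xs)"
    using inX by (intro bounded_subset[OF bounded_cbox[of 0 "\<chi> i. xmax"]]) (auto simp: Xset_cbox)
  have bz: "bounded (range (\<lambda>n. Zs n j))" for j
  proof -
    let ?T = "\<Union> (range (\<lambda>k. (\<lambda>x. Om k *v (P j *v x)) ` ?X))"
    have bT: "bounded ?T"
    proof (rule bounded_Union)
      show "finite (range (\<lambda>k. (\<lambda>x. Om k *v (P j *v x)) ` ?X))" by simp
      show "\<forall>S\<in>range (\<lambda>k. (\<lambda>x. Om k *v (P j *v x)) ` ?X). bounded S"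
        by (auto intro!: bounded_linear_image bounded_linear_compose[OF matrix_vector_mul_bounded_linear matrix_vector_mul_bounded_linear]
              simp: Xset_cbox bounded_cbox)
    qed
    have "range (\<lambda>n. Zs n j) \<subseteq> insert (Zs 0 j) (hardthr gc ` ?T)"
    proof
      fix z assume "z \<in> range (\<lambda>n. Zs n j)"
      then obtain n where z: "z = Zs n j" by blast
      show "z \<in> insert (Zs 0 j) (hardthr gc ` ?T)"
      proof (cases n)
        case 0 then show ?thesis using z by simp
      next
        case (Suc m)
        then show ?thesis using z Z_update inX[of "Suc m"] by blast
      qed
    qed
    then show ?thesis using bounded_hardthr[OF bT] by (meson bounded_insert bounded_subset)
  qed
  have Gconv: "(\<lambda>n. G (xs n) (Zs n) (Gs n)) \<longlonglongrightarrow> ereal Gst"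
    unfolding Gg using Gst by (simp add: lim_ereal)
  have a1: "\<forall>xst Zst Gmst. is_accum_pt xs Zs Gs xst Zst Gmst \<longrightarrow> G xst Zst Gmst = ereal Gst"
    using acc by blast
  have a2: "\<forall>xst Zst Gmst. is_accum_pt xs Zs Gs xst Zst Gmst \<longrightarrow>
           0 \<in> limiting_subdiff (\<lambda>x. G x Zst Gmst) xst \<and> (\<forall>Z Gm. G xst Zst Gmst \<le> G xst Z Gm)"
    using acc by blast
  have m: "\<forall>n. G (xs (Suc n)) (Zs (Suc n)) (Gs (Suc n)) \<le> G (xs n) (Zs n) (Gs n)"
    using gmono by (simp add: Gg)
  show ?thesis
    using bx bz m Gconv a1 a2 diff0 by blast
qed

end
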